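(* Assume (A1). Let $\delta>0$, $\beta>0$, and $\mathcal R=\{r_1,\dots,r_m\}$ with positive integers $r_1<\dots<r_m\le t$. Suppose the event $E$ described in the context holds. Then for every $1\le k\le m-1$, $$\lVert\hat{\bm C}^{[r_k]}(t)-\hat{\bm C}^{[r_{k+1}]}(t)\rVert_\infty\le\mathcal T(k)\ \Longrightarrow\ \mathcal B(r_{k+1})\le\mathcal B(r_k).$$
   Context: For matrices $\lVert\bm M\rVert_\infty=\max_{i,j}|M_{ij}|$. Let $\ell_1,\dots,\ell_n:\mathbb{R}^d\to\{-1,1\}$ be functions and $X_1,X_2,\dots$ random inputs with $X_k\sim D_k$; (A1): for every finite $t$, $(X_1,\dots,X_t)\sim\prod_{k=1}^tD_k$. Correlation matrix $C_{ij}(k)=\mathbb{E}_{X\sim D_k}[\ell_i(X)\ell_j(X)]$; $\bm C^{[r]}(t)=\frac1r\sum_{k=t-r+1}^t\bm C(k)$; $\hat{\bm C}^{[r]}(t)=\frac1r\sum_{k=t-r+1}^t\bm v_k\bm v_k^T$ with $\bm v_k=(\ell_1(X_k),\dots,\ell_n(X_k))^T$. Let $A_{\delta,n,m}=\sqrt{2\ln[(2m-1)n(n-1)/\delta]}$ and $\gamma_M=\max_{1\le k\le m-1}\sqrt{r_k/r_{k+1}}$. Define $\mathcal B(r)=\frac{A_{\delta,n,m}}{\sqrt r}\cdot\frac{2\beta+2}{1-\gamma_M}+\lVert\bm C(t)-\bm C^{[r]}(t)\rVert_\infty$ and, for $k\le m-1$, $\mathcal T(k)=\frac{2\beta A_{\delta,n,m}}{\sqrt{r_k}}+A_{\delta,n,m}\sqrt{\frac{1-r_k/r_{k+1}}{r_k}}$.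 The event $E$: for all $k\le m$, $\lVert\bm C(t)-\hat{\bm C}^{[r_k]}(t)\rVert_\infty\le\frac{A_{\delta,n,m}}{\sqrt{r_k}}+\lVert\bm C(t)-\bm C^{[r_k]}(t)\rVert_\infty$, and for all $k\le m-1$, $\lVert\bm C^{[r_k]}(t)-\bm C^{[r_{k+1}]}(t)-\hat{\bm C}^{[r_k]}(t)+\hat{\bm C}^{[r_{k+1}]}(t)\rVert_\infty\le A_{\delta,n,m}\sqrt{\frac{1-r_k/r_{k+1}}{r_k}}$. *)

theory Defs
  imports "HOL-Probability.Probability"
begin

text \<open>n x n matrices indexed by 1..n are represented as functions nat => nat => real.\<close>

definition mat_inf_norm :: "nat \<Rightarrow> (nat \<Rightarrow> nat \<Rightarrow> real) \<Rightarrow> real" where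
  "mat_inf_norm n M = Max (insert 0 {\<bar>M i j\<bar> | i j. i \<in> {1..n} \<and> j \<in> {1..n}})"

definition corr :: "(nat \<Rightarrow> 'a measure) \<Rightarrow> (nat \<Rightarrow> 'a \<Rightarrow> real) \<Rightarrow> nat \<Rightarrow> nat \<Rightarrow> nat \<Rightarrow> real" where
  "corr D l k i j = (\<integral>x. l i x * l j x \<partial>(D k))"

definition corr_avg :: "(nat \<Rightarrow> 'a measure) \<Rightarrow> (nat \<Rightarrow> 'a \<Rightarrow> real) \<Rightarrow> nat \<Rightarrow> nat \<Rightarrow> nat \<Rightarrow> nat \<Rightarrow> real" where
  "corr_avg D l r t i j = (1 / real r) * (\<Sum>k\<in>{t - r + 1..t}. corr D l k i j)"

definition corr_emp :: "(nat \<Rightarrow> 'a) \<Rightarrow> (nat \<Rightarrow> 'a \<Rightarrow> real) \<Rightarrow> nat \<Rightarrow> nat \<Rightarrow> nat \<Rightarrow> nat \<Rightarrow> real" where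
  "corr_emp x l r t i j = (1 / real r) * (\<Sum>k\<in>{t - r + 1..t}. l i (x k) * l j (x k))"

definition A_const :: "real \<Rightarrow> nat \<Rightarrow> nat \<Rightarrow> real" where
  "A_const \<delta> n m = sqrt (2 * ln ((2 * real m - 1) * real n * (real n - 1) / \<delta>))"

definition gammaM :: "(nat \<Rightarrow> nat) \<Rightarrow> nat \<Rightarrow> real" where
  "gammaM r m = Max ((\<lambda>k. sqrt (real (r k) / real (r (k + 1)))) ` {1..m - 1})"

definition B_bound :: "(nat \<Rightarrow> 'a measure) \<Rightarrow> (nat \<Rightarrow> 'a \<Rightarrow> real) \<Rightarrow> nat \<Rightarrow> real \<Rightarrow> real
     \<Rightarrow> (nat \<Rightarrow> nat) \<Rightarrow> nat \<Rightarrow> nat \<Rightarrow> nat \<Rightarrow> real" where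
  "B_bound D l n \<delta> \<beta> rs m t r =
     A_const \<delta> n m / sqrt (real r) * (2 * \<beta> + 2) / (1 - gammaM rs m)
     + mat_inf_norm n (\<lambda>i j. corr D l t i j - corr_avg D l r t i j)"

definition T_bound :: "nat \<Rightarrow> real \<Rightarrow> real \<Rightarrow> (nat \<Rightarrow> nat) \<Rightarrow> nat \<Rightarrow> nat \<Rightarrow> real" where
  "T_bound n \<delta> \<beta> rs m k =
     2 * \<beta> * A_const \<delta> n m / sqrt (real (rs k))
     + A_const \<delta> n m * sqrt ((1 - real (rs k) / real (rs (k + 1))) / real (rs k))"

text \<open>The event E, evaluated at the realised inputs x.\<close>
definition event_E :: "(nat \<Rightarrow> 'a measure) \<Rightarrow> (nat \<Rightarrow> 'a \<Rightarrow> real) \<Rightarrow> (nat \<Rightarrow> 'a) \<Rightarrow> nat \<Rightarrow> real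
     \<Rightarrow> (nat \<Rightarrow> nat) \<Rightarrow> nat \<Rightarrow> nat \<Rightarrow> bool" where
  "event_E D l x n \<delta> rs m t \<longleftrightarrow>
     (\<forall>k\<in>{1..m}. mat_inf_norm n (\<lambda>i j. corr D l t i j - corr_emp x l (rs k) t i j)
        \<le> A_const \<delta> n m / sqrt (real (rs k))
          + mat_inf_norm n (\<lambda>i j. corr D l t i j - corr_avg D l (rs k) t i j)) \<and>
     (\<forall>k\<in>{1..m - 1}. mat_inf_norm n (\<lambda>i j. corr_avg D l (rs k) t i j - corr_avg D l (rs (k + 1)) t i j
            - corr_emp x l (rs k) t i j + corr_emp x l (rs (k + 1)) t i j)
        \<le> A_const \<delta> n m * sqrt ((1 - real (rs k) / real (rs (k + 1))) / real (rs k)))"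

end

theory Submission
  imports Defs
begin

lemma mnorm_entry:
  assumes "i \<in> {1..n}" "j \<in> {1..n}"
  shows "\<bar>M i j\<bar> \<le> mat_inf_norm n M"
proof -
  have eq: "{\<bar>M i j\<bar> | i j. i \<in> {1..n} \<and> j \<in> {1..n}} = (\<lambda>(i,j). \<bar>M i j\<bar>) ` ({1..n}\<times>{1..n})"
    by (auto simp: image_iff Bex_def; blast)
  show ?thesis unfolding mat_inf_norm_def eq
    by (rule Max_ge) (use assms in auto)
qed

lemma mnorm_le:
  assumes "0 \<le> b" "\<And>i j. i \<in> {1..n} \<Longrightarrow> j \<in> {1..n} \<Longrightarrow> \<bar>M i j\<bar> \<le> b"
  shows "mat_inf_norm n M \<le> b"
proof -
  have eq: "{\<bar>M i j\<bar> | i j. i \<in> {1..n} \<and> j \<in> {1..n}} = (\<lambda>(i,j). \<bar>M i j\<bar>) ` ({1..n}\<times>{1..n})"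
    by (auto simp: image_iff Bex_def; blast)
  show ?thesis unfolding mat_inf_norm_def eq
    using assms by (subst Max_le_iff) auto
qed

lemma mnorm_nonneg: "0 \<le> mat_inf_norm n M"
proof -
  have eq: "{\<bar>M i j\<bar> | i j. i \<in> {1..n} \<and> j \<in> {1..n}} = (\<lambda>(i,j). \<bar>M i j\<bar>) ` ({1..n}\<times>{1..n})"
    by (auto simp: image_iff Bex_def; blast)
  show ?thesis unfolding mat_inf_norm_def eq by (rule Max_ge) auto
qed

lemma arith_key:
  fixes a r r' g \<gamma> \<beta> :: real
  assumes "0 < r" "r < r'" "sqrt (r / r') \<le> \<gamma>" "\<gamma> < 1" "\<beta> > 0" "a \<ge> 0"
  shows "2 * (a * sqrt ((1 - r / r') / r)) + 2 * \<beta> * a / sqrt r + a / sqrt r' * (2 * \<beta> + 2) / (1 - \<gamma>)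
         \<le> a / sqrt r * (2 * \<beta> + 2) / (1 - \<gamma>)"
proof -
  define u where "u = 1 / sqrt r"
  have u: "u > 0" using assms unfolding u_def by simp
  have s: "sqrt ((1 - r / r') / r) \<le> u"
  proof -
    have "(1 - r / r') / r \<le> 1 / r" using assms by (simp add: divide_right_mono)
    hence "sqrt ((1 - r / r') / r) \<le> sqrt (1 / r)" by (rule real_sqrt_le_mono)
    thus ?thesis unfolding u_def by (simp add: real_sqrt_divide)
  qed
  have r': "1 / sqrt r' = sqrt (r / r') * u" unfolding u_def using assms
    by (simp add: real_sqrt_divide)
  define g where "g = sqrt (r / r')"
  have g0: "g \<ge> 0" unfolding g_def using assms by simp
  have lhs1: "2 * (a * sqrt ((1 - r / r') / r)) \<le> 2 * a * u"
    using s assms by (simp add: mult_left_mono)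
  have e1: "2 * \<beta> * a / sqrt r = 2 * \<beta> * a * u" unfolding u_def by simp
  have e2: "a / sqrt r' * (2 * \<beta> + 2) / (1 - \<gamma>) = a * g * u * (2 * \<beta> + 2) / (1 - \<gamma>)"
    using r' unfolding g_def by (metis (no_types, lifting) mult.assoc times_divide_eq_right mult_1_right)
  have e3: "a / sqrt r * (2 * \<beta> + 2) / (1 - \<gamma>) = a * u * (2 * \<beta> + 2) / (1 - \<gamma>)"
    unfolding u_def by simp
  have key: "2 * a * u + 2 * \<beta> * a * u + a * g * u * (2 * \<beta> + 2) / (1 - \<gamma>)
      \<le> a * u * (2 * \<beta> + 2) / (1 - \<gamma>)"
  proof -
    define X where "X = a * u * (2 * \<beta> + 2)"
    have p: "X \<ge> 0" using assms u unfolding X_def by simp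
    have "(1 - \<gamma>) + g \<le> 1" using assms unfolding g_def by simp
    hence "X * ((1 - \<gamma>) + g) \<le> X * 1"
      using p by (rule mult_left_mono)
    hence "X * ((1 - \<gamma>) + g) / (1 - \<gamma>) \<le> X / (1 - \<gamma>)"
      using assms by (simp add: divide_right_mono)
    moreover have "X * ((1 - \<gamma>) + g) / (1 - \<gamma>) = X + X * g / (1 - \<gamma>)"
      using assms by (simp add: field_simps)
    moreover have "2 * a * u + 2 * \<beta> * a * u = X" unfolding X_def by (simp add: algebra_simps)
    moreover have "a * g * u * (2 * \<beta> + 2) / (1 - \<gamma>) = X * g / (1 - \<gamma>)" unfolding X_def by (simp add: algebra_simps)
    moreover have "a * u * (2 * \<beta> + 2) / (1 - \<gamma>) = X / (1 - \<gamma>)" unfolding X_def by simp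
    ultimately show ?thesis by linarith
  qed
  show ?thesis using lhs1 e1 e2 e3 key by linarith
qed

lemma rs_pos:
  fixes rs :: "nat \<Rightarrow> nat" and k m :: nat
  assumes "rs 1 \<ge> 1" "\<And>k. k \<in> {1..m - 1} \<Longrightarrow> rs k < rs (k + 1)"
  shows "k \<in> {1..m} \<longrightarrow> rs k \<ge> 1"
proof (induction k)
  case 0 then show ?case by simp
next
  case (Suc k)
  show ?case
  proof
  assume kin: "Suc k \<in> {1..m}"
  show "rs (Suc k) \<ge> 1"
  proof (cases "k = 0")
    case True then show ?thesis using assms by simp
  next
    case False
    then have "k \<in> {1..m-1}" using kin by auto
    then show ?thesis using Suc kin assms(2)[of k] by auto
  qed
  qed
qed

theorem proposition7:
  fixes M :: "'w measure"
    and D :: "nat \<Rightarrow> 'a::euclidean_space measure"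
    and X :: "nat \<Rightarrow> 'w \<Rightarrow> 'a"
    and l :: "nat \<Rightarrow> 'a \<Rightarrow> real"
    and n m t :: nat and rs :: "nat \<Rightarrow> nat"
    and \<delta> \<beta> :: real and \<omega> :: 'w
  assumes "prob_space M"
    and "\<And>k. prob_space (D k)"
    and "\<And>k. sets (D k) = sets borel"
    and "\<And>k. X k \<in> borel_measurable M"
    and "\<And>i x. i \<in> {1..n} \<Longrightarrow> l i x \<in> {-1, 1}"
    and A1: "\<And>s. distr M (PiM {1..s} (\<lambda>_. borel)) (\<lambda>w. \<lambda>k\<in>{1..s}. X k w) = PiM {1..s} D"
    and "\<delta> > 0" and "\<beta> > 0"
    and "m \<ge> 1"
    and "rs 1 \<ge> 1"
    and "\<And>k. k \<in> {1..m - 1} \<Longrightarrow> rs k < rs (k + 1)"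
    and "rs m \<le> t"
    and "\<omega> \<in> space M"
    and "event_E D l (\<lambda>k. X k \<omega>) n \<delta> rs m t"
  shows "\<forall>k\<in>{1..m - 1}.
           mat_inf_norm n (\<lambda>i j. corr_emp (\<lambda>k. X k \<omega>) l (rs k) t i j - corr_emp (\<lambda>k. X k \<omega>) l (rs (k + 1)) t i j)
             \<le> T_bound n \<delta> \<beta> rs m k
           \<longrightarrow> B_bound D l n \<delta> \<beta> rs m t (rs (k + 1)) \<le> B_bound D l n \<delta> \<beta> rs m t (rs k)"
proof (intro ballI impI)
  fix k assume k: "k \<in> {1..m - 1}"
  define x where "x = (\<lambda>k. X k \<omega>)"
  define A where "A = A_const \<delta> n m"
  define s where "s = sqrt ((1 - real (rs k) / real (rs (k + 1))) / real (rs k))"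
  define C where "C = corr D l t"
  define Ca where "Ca = (\<lambda>r. corr_avg D l r t)"
  define Ce where "Ce = (\<lambda>r. corr_emp x l r t)"
  assume hyp: "mat_inf_norm n (\<lambda>i j. corr_emp (\<lambda>k. X k \<omega>) l (rs k) t i j - corr_emp (\<lambda>k. X k \<omega>) l (rs (k + 1)) t i j)
             \<le> T_bound n \<delta> \<beta> rs m k"
  hence hyp': "mat_inf_norm n (\<lambda>i j. Ce (rs k) i j - Ce (rs (k+1)) i j) \<le> 2 * \<beta> * A / sqrt (real (rs k)) + A * s"
    unfolding T_bound_def Ce_def x_def A_def s_def by simp
  have E2: "mat_inf_norm n (\<lambda>i j. Ca (rs k) i j - Ca (rs (k + 1)) i j - Ce (rs k) i j + Ce (rs (k + 1)) i j) \<le> A * s"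
    using assms(14) k unfolding event_E_def Ca_def Ce_def x_def A_def s_def by blast
  have rk: "rs k \<ge> 1" using rs_pos[where rs=rs and m=m and k=k, OF assms(10) assms(11)] k by auto
  have lt: "rs k < rs (k+1)" using assms(11) k by blast
  have s0: "s > 0" unfolding s_def using rk lt by (simp add: field_simps)
  have "A * s \<ge> 0" using E2 mnorm_nonneg[of n] by (meson order_trans)
  hence A0: "A \<ge> 0" using s0 by (simp add: zero_le_mult_iff)
  have Delta: "mat_inf_norm n (\<lambda>i j. C i j - Ca (rs (k+1)) i j)
      \<le> mat_inf_norm n (\<lambda>i j. C i j - Ca (rs k) i j) + (2 * \<beta> * A / sqrt (real (rs k)) + A * s) + A * s"
  proof (rule mnorm_le)
    show "0 \<le> mat_inf_norm n (\<lambda>i j. C i j - Ca (rs k) i j) + (2 * \<beta> * A / sqrt (real (rs k)) + A * s) + A * s"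
      using mnorm_nonneg[of n] A0 s0 assms(8) rk by (simp add: add_nonneg_nonneg)
    fix i j assume ij: "i \<in> {1..n}" "j \<in> {1..n}"
    have a: "\<bar>C i j - Ca (rs k) i j\<bar> \<le> mat_inf_norm n (\<lambda>i j. C i j - Ca (rs k) i j)"
      using mnorm_entry[OF ij, of "\<lambda>i j. C i j - Ca (rs k) i j"] by simp
    have b: "\<bar>Ce (rs k) i j - Ce (rs (k+1)) i j\<bar> \<le> 2 * \<beta> * A / sqrt (real (rs k)) + A * s"
      using mnorm_entry[OF ij, of "\<lambda>i j. Ce (rs k) i j - Ce (rs (k+1)) i j"] hyp' by simp
    have c: "\<bar>Ca (rs k) i j - Ca (rs (k + 1)) i j - Ce (rs k) i j + Ce (rs (k + 1)) i j\<bar> \<le> A * s"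
      using mnorm_entry[OF ij, of "\<lambda>i j. Ca (rs k) i j - Ca (rs (k + 1)) i j - Ce (rs k) i j + Ce (rs (k + 1)) i j"] E2 by simp
    show "\<bar>C i j - Ca (rs (k+1)) i j\<bar>
      \<le> mat_inf_norm n (\<lambda>i j. C i j - Ca (rs k) i j) + (2 * \<beta> * A / sqrt (real (rs k)) + A * s) + A * s"
      using a b c by linarith
  qed
  define \<gamma> where "\<gamma> = gammaM rs m"
  have fin: "finite ((\<lambda>k. sqrt (real (rs k) / real (rs (k + 1)))) ` {1..m - 1})" by simp
  have g1: "sqrt (real (rs k) / real (rs (k+1))) \<le> \<gamma>"
    unfolding \<gamma>_def gammaM_def using fin k by (intro Max_ge) auto
  have g2: "\<gamma> < 1"
    unfolding \<gamma>_def gammaM_def using fin k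
  proof (subst Max_less_iff)
    show "\<forall>a\<in>(\<lambda>k. sqrt (real (rs k) / real (rs (k + 1)))) ` {1..m - 1}. a < 1"
    proof
      fix a assume "a \<in> (\<lambda>k. sqrt (real (rs k) / real (rs (k + 1)))) ` {1..m - 1}"
      then obtain j where j: "j \<in> {1..m-1}" and a: "a = sqrt (real (rs j) / real (rs (j + 1)))" by auto
      have "rs j < rs (j+1)" using assms(11) j by blast
      hence "real (rs j) / real (rs (j + 1)) < 1" by simp
      thus "a < 1" unfolding a by simp
    qed
  qed (use fin k in auto)
  have ak: "2 * (A * s) + 2 * \<beta> * A / sqrt (real (rs k)) + A / sqrt (real (rs (k+1))) * (2 * \<beta> + 2) / (1 - \<gamma>)
         \<le> A / sqrt (real (rs k)) * (2 * \<beta> + 2) / (1 - \<gamma>)"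
    unfolding s_def using arith_key[of "real (rs k)" "real (rs (k+1))" \<gamma> \<beta> A] rk lt g1 g2 assms(8) A0 by simp
  show "B_bound D l n \<delta> \<beta> rs m t (rs (k + 1)) \<le> B_bound D l n \<delta> \<beta> rs m t (rs k)"
    unfolding B_bound_def
    using Delta ak unfolding A_def[symmetric] \<gamma>_def[symmetric] C_def Ca_def by linarith
qed

end
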